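(* Let $D\mapsto f_D\in\mathbb{H}$ be a functional summary on a collection $\mathcal{D}$ of datasets, and suppose there exist adjacent datasets $D_1,D_2\in\mathcal{D}$ with $f_{D_1}-f_{D_2}\in\mathcal{H}_C\setminus\mathcal{H}_{1,C}$. Let $Z$ be an ICLP with mean $0$ and covariance operator $C$. Then for every $\epsilon>0$ there is no $\sigma>0$ such that the mechanism $D\mapsto f_D+\sigma Z$ satisfies $\epsilon$-differential privacy.
   Context: $\mathbb{H}$ is a real separable infinite-dimensional Hilbert space. $C$ is a covariance operator on $\mathbb{H}$ with eigenvalues $\lambda_1\ge\lambda_2\ge\dots>0$ and eigenvectors $\{\phi_j\}_{j\ge1}$ forming an orthonormal basis of $\mathbb{H}$; $h_j=\langle h,\phi_j\rangle$. $\|h\|_C=(\sum_j h_j^2/\lambda_j)^{1/2}$, $\mathcal{H}_C=\{h:\|h\|_C<\infty\}$, $\|h\|_{1,C}=\sum_j|h_j|/\sqrt{\lambda_j}$, $\mathcal{H}_{1,C}=\{h:\|h\|_{1,C}<\infty\}\subseteq\mathcal{H}_C$. An ICLP with mean $\mu$ and covariance operator $C$ is the random element $\mu+\sum_{j\ge1}\sqrt{\lambda_j}Z_j\phi_j$ (series converging in $L^2(\Omega;\mathbb{H})$), where $Z_j$ are i.i.d. Laplace with mean $0$ and variance $1$, i.e. with density $\frac1{\sqrt2}e^{-\sqrt2|x|}$. Datasets $D,D'$ are adjacent if they differ in exactly one record. For a mechanism releasing the random element $\tilde f_D$, let $P_D$ be its law on the Borel $\sigma$-algebra of $\mathbb{H}$;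 the mechanism is $\epsilon$-differentially private if $P_D(A)\le e^{\epsilon}P_{D'}(A)$ for all adjacent $D,D'$ and all Borel $A\subseteq\mathbb{H}$. *)

theory Defs
  imports "HOL-Probability.Probability"
begin

text \<open>Covariance operator C on the Hilbert space with eigenvalues lam j (positive,
  non-increasing, summable = trace class) and eigenvectors phi j forming an orthonormal basis.\<close>
definition covariance_operator ::
  "('h::{real_inner,complete_space} \<Rightarrow> 'h) \<Rightarrow> (nat \<Rightarrow> real) \<Rightarrow> (nat \<Rightarrow> 'h) \<Rightarrow> bool" where
  "covariance_operator C lam phi \<longleftrightarrow>
     bounded_linear C \<and>
     (\<forall>i j. phi i \<bullet> phi j = (if i = j then 1 else 0)) \<and>
     (\<forall>h. (\<lambda>n. \<Sum>j<n. (h \<bullet> phi j) *\<^sub>R phi j) \<longlonglongrightarrow> h) \<and>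
     (\<forall>j. C (phi j) = lam j *\<^sub>R phi j) \<and>
     (\<forall>j. lam j > 0) \<and> antimono lam \<and> summable lam"

definition H_C :: "(nat \<Rightarrow> real) \<Rightarrow> (nat \<Rightarrow> 'h::real_inner) \<Rightarrow> 'h set" where
  "H_C lam phi = {h. summable (\<lambda>j. (h \<bullet> phi j)\<^sup>2 / lam j)}"

definition H_1C :: "(nat \<Rightarrow> real) \<Rightarrow> (nat \<Rightarrow> 'h::real_inner) \<Rightarrow> 'h set" where
  "H_1C lam phi = {h. summable (\<lambda>j. \<bar>h \<bullet> phi j\<bar> / sqrt (lam j))}"

text \<open>Laplace density with mean 0 and variance 1.\<close>
definition laplace_density :: "real \<Rightarrow> ennreal" where
  "laplace_density x = ennreal (exp (- sqrt 2 * \<bar>x\<bar>) / sqrt 2)"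

definition iid_laplace :: "'a measure \<Rightarrow> (nat \<Rightarrow> 'a \<Rightarrow> real) \<Rightarrow> bool" where
  "iid_laplace M Zs \<longleftrightarrow>
     prob_space.indep_vars M (\<lambda>_. borel) Zs UNIV \<and>
     (\<forall>j. distributed M lborel (Zs j) laplace_density)"

definition ICLP_partial ::
  "(nat \<Rightarrow> real) \<Rightarrow> (nat \<Rightarrow> 'h::real_normed_vector) \<Rightarrow> (nat \<Rightarrow> 'a \<Rightarrow> real) \<Rightarrow> nat \<Rightarrow> 'a \<Rightarrow> 'h" where
  "ICLP_partial lam phi Zs n \<omega> = (\<Sum>j<n. (sqrt (lam j) * Zs j \<omega>) *\<^sub>R phi j)"

definition is_ICLP ::
  "'a measure \<Rightarrow> 'h::real_normed_vector \<Rightarrow> (nat \<Rightarrow> real) \<Rightarrow> (nat \<Rightarrow> 'h) \<Rightarrow>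
   (nat \<Rightarrow> 'a \<Rightarrow> real) \<Rightarrow> ('a \<Rightarrow> 'h) \<Rightarrow> bool" where
  "is_ICLP M mu lam phi Zs Z \<longleftrightarrow>
     iid_laplace M Zs \<and> Z \<in> borel_measurable M \<and>
     (\<lambda>n. \<integral>\<^sup>+\<omega>. ennreal ((norm (Z \<omega> - (mu + ICLP_partial lam phi Zs n \<omega>)))\<^sup>2) \<partial>M)
        \<longlonglongrightarrow> 0"

definition adjacent :: "'r list \<Rightarrow> 'r list \<Rightarrow> bool" where
  "adjacent D D' \<longleftrightarrow> length D = length D' \<and> card {i. i < length D \<and> D ! i \<noteq> D' ! i} = 1"

definition eps_DP ::
  "'a measure \<Rightarrow> 'r list set \<Rightarrow> ('r list \<Rightarrow> 'a \<Rightarrow> 'h::topological_space) \<Rightarrow> real \<Rightarrow> bool" where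
  "eps_DP M Ds mech eps \<longleftrightarrow>
     (\<forall>D\<in>Ds. \<forall>D'\<in>Ds. adjacent D D' \<longrightarrow>
        (\<forall>A\<in>sets borel.
           measure (distr M borel (mech D)) A \<le> exp eps * measure (distr M borel (mech D')) A))"

end

theory Submission imports Defs begin

definition Bset :: "real \<Rightarrow> real set" where
  "Bset a = (if 0 \<le> a then {a..} else {..a})"

lemma Bset_borel[measurable]: "Bset a \<in> sets borel"
  by (simp add: Bset_def)

lemma laplace_density_meas[measurable]: "laplace_density \<in> borel_measurable borel"
  unfolding laplace_density_def by measurable

lemma shift_eq: "y \<in> Bset a \<Longrightarrow>
  laplace_density (y - a) = ennreal (exp (sqrt 2 * \<bar>a\<bar>)) * laplace_density y"
  unfolding laplace_density_def Bset_def
proof -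
  assume y: "y \<in> (if 0 \<le> a then {a..} else {..a})"
  have "\<bar>y - a\<bar> = \<bar>y\<bar> - \<bar>a\<bar>" using y by (auto split: if_splits)
  hence "exp (- sqrt 2 * \<bar>y - a\<bar>) / sqrt 2 = exp (sqrt 2 * \<bar>a\<bar>) * (exp (- sqrt 2 * \<bar>y\<bar>) / sqrt 2)"
  proof -
    have "- sqrt 2 * \<bar>y - a\<bar> = sqrt 2 * \<bar>a\<bar> + - sqrt 2 * \<bar>y\<bar>"
      using \<open>\<bar>y - a\<bar> = \<bar>y\<bar> - \<bar>a\<bar>\<close> by (simp add: right_diff_distrib)
    thus ?thesis by (simp add: exp_diff exp_minus field_simps)
  qed
  thus "ennreal (exp (- sqrt 2 * \<bar>y - a\<bar>) / sqrt 2) =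
    ennreal (exp (sqrt 2 * \<bar>a\<bar>)) * ennreal (exp (- sqrt 2 * \<bar>y\<bar>) / sqrt 2)"
    by (simp add: ennreal_mult[symmetric])
qed

lemma emeasure_dist:
  assumes "distributed M lborel X laplace_density" "S \<in> sets borel"
  shows "emeasure M (X -` S \<inter> space M) = (\<integral>\<^sup>+x. laplace_density x * indicator S x \<partial>lborel)"
proof -
  have "emeasure M (X -` S \<inter> space M) = emeasure (distr M lborel X) S"
    using distributed_measurable[OF assms(1)] assms(2) by (simp add: emeasure_distr)
  also have "\<dots> = emeasure (density lborel laplace_density) S"
    unfolding distributed_distr_eq_density[OF assms(1)] ..
  also have "\<dots> = (\<integral>\<^sup>+x. laplace_density x * indicator S x \<partial>lborel)"
    using assms(2) by (simp add: emeasure_density)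
  finally show ?thesis .
qed

lemma coord_shift:
  assumes "distributed M lborel X laplace_density"
  shows "emeasure M ((\<lambda>\<omega>. a + X \<omega>) -` Bset a \<inter> space M) =
         ennreal (exp (sqrt 2 * \<bar>a\<bar>)) * emeasure M (X -` Bset a \<inter> space M)"
proof -
  have "(\<lambda>\<omega>. a + X \<omega>) -` Bset a \<inter> space M = X -` {x. a + x \<in> Bset a} \<inter> space M" by auto
  moreover have "{x. a + x \<in> Bset a} \<in> sets borel"
    by (simp add: Bset_def)
  ultimately have "emeasure M ((\<lambda>\<omega>. a + X \<omega>) -` Bset a \<inter> space M) =
     (\<integral>\<^sup>+x. laplace_density x * indicator {x. a + x \<in> Bset a} x \<partial>lborel)"
    using emeasure_dist[OF assms, of "{x. a + x \<in> Bset a}"] by (simp add: vimage_def)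
  also have "\<dots> = (\<integral>\<^sup>+x. (\<lambda>y. laplace_density (y - a) * indicator (Bset a) y) (a + 1 * x) \<partial>lborel)"
    by (simp add: indicator_def)
  also have "\<dots> = (\<integral>\<^sup>+y. laplace_density (y - a) * indicator (Bset a) y \<partial>lborel)"
    by (subst nn_integral_real_affine[where c=1 and t=a]) auto
  also have "\<dots> = (\<integral>\<^sup>+y. ennreal (exp (sqrt 2 * \<bar>a\<bar>)) * (laplace_density y * indicator (Bset a) y) \<partial>lborel)"
    by (intro nn_integral_cong) (auto simp: indicator_def shift_eq)
  also have "\<dots> = ennreal (exp (sqrt 2 * \<bar>a\<bar>)) * (\<integral>\<^sup>+y. laplace_density y * indicator (Bset a) y \<partial>lborel)"
    by (simp add: nn_integral_cmult)
  also have "\<dots> = ennreal (exp (sqrt 2 * \<bar>a\<bar>)) * emeasure M (X -` Bset a \<inter> space M)"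
    using emeasure_dist[OF assms] by simp
  finally show ?thesis .
qed

lemma coord_pos:
  assumes "distributed M lborel X laplace_density"
  shows "emeasure M (X -` Bset a \<inter> space M) > 0"
proof -
  define I where "I = (if 0 \<le> a then {a..a+1} else {a-1..a})"
  define c where "c = exp (- sqrt 2 * (\<bar>a\<bar> + 1)) / sqrt 2"
  have c: "c > 0" unfolding c_def by simp
  have "ennreal c * 1 = (\<integral>\<^sup>+x. ennreal c * indicator I x \<partial>lborel)"
    by (simp add: nn_integral_cmult I_def)
  also have "\<dots> \<le> (\<integral>\<^sup>+x. laplace_density x * indicator (Bset a) x \<partial>lborel)"
  proof (intro nn_integral_mono)
    fix x show "ennreal c * indicator I x \<le> laplace_density x * indicator (Bset a) x"
    proof (cases "x \<in> I")
      case True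
      hence "x \<in> Bset a" "\<bar>x\<bar> \<le> \<bar>a\<bar> + 1" by (auto simp: I_def Bset_def split: if_splits)
      hence "c \<le> exp (- sqrt 2 * \<bar>x\<bar>) / sqrt 2" unfolding c_def
        by (intro divide_right_mono) auto
      thus ?thesis using \<open>x \<in> Bset a\<close> True by (simp add: laplace_density_def indicator_def)
    qed (simp add: indicator_def)
  qed
  also have "\<dots> = emeasure M (X -` Bset a \<inter> space M)"
    using emeasure_dist[OF assms] by simp
  finally show ?thesis using c
    by (metis ennreal_eq_0_iff less_le_trans mult_1_right not_gr_zero order_less_irrefl)
qed

lemma partial_inner:
  assumes orth: "\<forall>i j. phi i \<bullet> phi j = (if i = j then 1 else 0)" and "j < n"
  shows "ICLP_partial lam phi Zs n \<omega> \<bullet> phi j = sqrt (lam j) * Zs j \<omega>"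
proof -
  have "ICLP_partial lam phi Zs n \<omega> \<bullet> phi j = (\<Sum>i<n. if i = j then sqrt (lam i) * Zs i \<omega> else 0)"
    unfolding ICLP_partial_def inner_sum_left
    by (intro sum.cong) (use orth in auto)
  also have "\<dots> = sqrt (lam j) * Zs j \<omega>" using assms(2) by (simp add: sum.delta')
  finally show ?thesis .
qed

lemma coord_AE:
  fixes phi :: "nat \<Rightarrow> 'h::{real_inner,complete_space,second_countable_topology}"
  assumes cov: "covariance_operator C lam phi" and P: "prob_space M"
    and icl: "is_ICLP M 0 lam phi Zs Z"
  shows "AE \<omega> in M. Z \<omega> \<bullet> phi j = sqrt (lam j) * Zs j \<omega>"
proof -
  have orth: "\<forall>i j. phi i \<bullet> phi j = (if i = j then 1 else 0)"
    using cov by (simp add: covariance_operator_def)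
  have nphi: "norm (phi j) = 1" using orth by (simp add: norm_eq_sqrt_inner)
  have Zm[measurable]: "Z \<in> borel_measurable M" using icl by (simp add: is_ICLP_def)
  have Zsm[measurable]: "Zs j \<in> borel_measurable M"
    using icl distributed_measurable[of M lborel "Zs j" laplace_density]
    by (simp add: is_ICLP_def iid_laplace_def)
  define e where "e \<omega> = (Z \<omega> \<bullet> phi j - sqrt (lam j) * Zs j \<omega>)\<^sup>2" for \<omega>
  have em[measurable]: "e \<in> borel_measurable M" unfolding e_def by measurable
  define s where "s n = (\<integral>\<^sup>+\<omega>. ennreal ((norm (Z \<omega> - (0 + ICLP_partial lam phi Zs n \<omega>)))\<^sup>2) \<partial>M)" for n
  have lim: "s \<longlonglongrightarrow> 0" using icl unfolding is_ICLP_def s_def by simp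
  have le: "(\<integral>\<^sup>+\<omega>. ennreal (e \<omega>) \<partial>M) \<le> s n" if "j < n" for n
    unfolding s_def
  proof (intro nn_integral_mono ennreal_leI)
    fix \<omega>
    have "(Z \<omega> - (0 + ICLP_partial lam phi Zs n \<omega>)) \<bullet> phi j = Z \<omega> \<bullet> phi j - sqrt (lam j) * Zs j \<omega>"
      using partial_inner[OF orth that] by (simp add: inner_diff_left)
    moreover have "\<bar>(Z \<omega> - (0 + ICLP_partial lam phi Zs n \<omega>)) \<bullet> phi j\<bar> \<le> norm (Z \<omega> - (0 + ICLP_partial lam phi Zs n \<omega>))"
      using Cauchy_Schwarz_ineq2[of "Z \<omega> - (0 + ICLP_partial lam phi Zs n \<omega>)" "phi j"] nphi by simp
    ultimately show "e \<omega> \<le> (norm (Z \<omega> - (0 + ICLP_partial lam phi Zs n \<omega>)))\<^sup>2"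
      unfolding e_def by (metis abs_ge_zero power2_abs power_mono)
  qed
  have "(\<integral>\<^sup>+\<omega>. ennreal (e \<omega>) \<partial>M) \<le> 0"
    by (rule tendsto_lowerbound[OF lim]) (auto simp: eventually_sequentially intro!: exI[of _ "Suc j"] le)
  hence "(\<integral>\<^sup>+\<omega>. ennreal (e \<omega>) \<partial>M) = 0" by simp
  hence "AE \<omega> in M. ennreal (e \<omega>) = 0" by (subst (asm) nn_integral_0_iff_AE) auto
  thus ?thesis
    by eventually_elim (simp add: e_def)
qed

lemma law_prod:
  fixes phi :: "nat \<Rightarrow> 'h::{real_inner,complete_space,second_countable_topology}"
  assumes cov: "covariance_operator C lam phi" and P: "prob_space M"
    and icl: "is_ICLP M 0 lam phi Zs Z" and sig: "\<sigma> > 0" and n: "n \<noteq> 0"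
    and B: "\<And>j. B j \<in> sets borel"
  shows "measure (distr M borel (\<lambda>\<omega>. y0 + \<sigma> *\<^sub>R Z \<omega>)) {y. \<forall>j<n. ((y - b) \<bullet> phi j) / (\<sigma> * sqrt (lam j)) \<in> B j}
    = (\<Prod>j<n. measure M (Zs j -` {x. ((y0 - b) \<bullet> phi j) / (\<sigma> * sqrt (lam j)) + x \<in> B j} \<inter> space M))"
proof -
  interpret prob_space M by (rule P)
  have lam: "\<And>j. lam j > 0" using cov by (simp add: covariance_operator_def)
  have Zm[measurable]: "Z \<in> borel_measurable M" using icl by (simp add: is_ICLP_def)
  have iid: "iid_laplace M Zs" using icl by (simp add: is_ICLP_def)
  have Zsm[measurable]: "Zs j \<in> borel_measurable M" for j
    using iid distributed_measurable[of M lborel "Zs j" laplace_density]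
    by (simp add: iid_laplace_def)
  define g where "g j y = ((y - b) \<bullet> phi j) / (\<sigma> * sqrt (lam j))" for j y
  define c where "c j = ((y0 - b) \<bullet> phi j) / (\<sigma> * sqrt (lam j))" for j
  define A where "A = {y. \<forall>j<n. g j y \<in> B j}"
  have gm[measurable]: "g j \<in> borel_measurable borel" for j unfolding g_def by measurable
  have "A = (\<Inter>j\<in>{..<n}. g j -` B j)" unfolding A_def using n by auto
  moreover have "g j -` B j \<in> sets borel" for j
    using measurable_sets[OF gm B, of j] by simp
  ultimately have Ab: "A \<in> sets borel" using n
    by (auto intro!: sets.finite_INT)
  have mm: "(\<lambda>\<omega>. y0 + \<sigma> *\<^sub>R Z \<omega>) \<in> borel_measurable M" by measurable
  define S where "S j = {x. c j + x \<in> B j}" for j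
  have Sb: "S j \<in> sets borel" for j
  proof -
    have "S j = (\<lambda>x. c j + x) -` B j" by (auto simp: S_def)
    moreover have "(\<lambda>x::real. c j + x) \<in> borel_measurable borel" by measurable
    ultimately show ?thesis using measurable_sets[OF _ B, of "\<lambda>x. c j + x" borel j] by simp
  qed
  have "measure (distr M borel (\<lambda>\<omega>. y0 + \<sigma> *\<^sub>R Z \<omega>)) A = measure M ((\<lambda>\<omega>. y0 + \<sigma> *\<^sub>R Z \<omega>) -` A \<inter> space M)"
    using mm Ab by (simp add: measure_distr)
  also have "\<dots> = measure M (\<Inter>j\<in>{..<n}. Zs j -` S j \<inter> space M)"
  proof (rule measure_eq_AE)
    have "AE \<omega> in M. \<forall>j\<in>{..<n}. Z \<omega> \<bullet> phi j = sqrt (lam j) * Zs j \<omega>"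
      by (intro AE_finite_allI coord_AE[OF cov P icl]) auto
    thus "AE x in M. (x \<in> (\<lambda>\<omega>. y0 + \<sigma> *\<^sub>R Z \<omega>) -` A \<inter> space M) = (x \<in> (\<Inter>j\<in>{..<n}. Zs j -` S j \<inter> space M))"
    proof (eventually_elim)
      case (elim \<omega>)
      have "g j (y0 + \<sigma> *\<^sub>R Z \<omega>) = c j + Zs j \<omega>" if "j < n" for j
      proof -
        have s: "sqrt (lam j) > 0" using lam by simp
        have "g j (y0 + \<sigma> *\<^sub>R Z \<omega>) = ((y0 - b) \<bullet> phi j + \<sigma> * (Z \<omega> \<bullet> phi j)) / (\<sigma> * sqrt (lam j))"
          unfolding g_def by (simp add: algebra_simps inner_diff_left inner_add_left)
        also have "\<dots> = c j + Zs j \<omega>" unfolding c_def using elim that s sig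
          by (simp add: add_divide_distrib)
        finally show ?thesis .
      qed
      thus ?case using n by (auto simp: A_def S_def add.commute)
    qed
    show "(\<lambda>\<omega>. y0 + \<sigma> *\<^sub>R Z \<omega>) -` A \<inter> space M \<in> sets M" using mm Ab by measurable
    show "(\<Inter>j\<in>{..<n}. Zs j -` S j \<inter> space M) \<in> sets M" using n Sb
      by (intro sets.finite_INT) (auto intro!: measurable_sets[OF Zsm])
  qed
  also have "\<dots> = (\<Prod>j<n. measure M (Zs j -` S j \<inter> space M))"
    using iid n Sb by (intro indep_varsD[where M'="\<lambda>_. borel" and I=UNIV]) (auto simp: iid_laplace_def)
  finally show ?thesis unfolding A_def g_def S_def c_def .
qed

theorem theorem3:
  fixes C :: "'h::{real_inner,complete_space,second_countable_topology} \<Rightarrow> 'h"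
    and lam :: "nat \<Rightarrow> real" and phi :: "nat \<Rightarrow> 'h"
    and f :: "'r list \<Rightarrow> 'h" and Ds :: "'r list set"
    and M :: "'a measure" and Zs :: "nat \<Rightarrow> 'a \<Rightarrow> real" and Z :: "'a \<Rightarrow> 'h"
    and D1 D2 :: "'r list" and \<epsilon> :: real
  assumes "covariance_operator C lam phi"
    and "D1 \<in> Ds" and "D2 \<in> Ds" and "adjacent D1 D2"
    and "f D1 - f D2 \<in> H_C lam phi - H_1C lam phi"
    and "prob_space M"
    and "is_ICLP M 0 lam phi Zs Z"
    and "\<epsilon> > 0"
  shows "\<not> (\<exists>\<sigma>>0. eps_DP M Ds (\<lambda>D \<omega>. f D + \<sigma> *\<^sub>R Z \<omega>) \<epsilon>)"
proof
  assume "\<exists>\<sigma>>0. eps_DP M Ds (\<lambda>D \<omega>. f D + \<sigma> *\<^sub>R Z \<omega>) \<epsilon>"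
  then obtain \<sigma> where sig: "\<sigma> > 0" and dp: "eps_DP M Ds (\<lambda>D \<omega>. f D + \<sigma> *\<^sub>R Z \<omega>) \<epsilon>" by blast
  note cov = assms(1) and P = assms(6) and icl = assms(7)
  interpret prob_space M by (rule P)
  have lam: "\<And>j. lam j > 0" using cov by (simp add: covariance_operator_def)
  have iid: "iid_laplace M Zs" using icl by (simp add: is_ICLP_def)
  have dist: "distributed M lborel (Zs j) laplace_density" for j
    using iid by (simp add: iid_laplace_def)
  define d where "d = f D1 - f D2"
  define a where "a j = (d \<bullet> phi j) / (\<sigma> * sqrt (lam j))" for j
  have ns: "\<not> summable (\<lambda>j. \<bar>d \<bullet> phi j\<bar> / sqrt (lam j))"
    using assms(5) by (simp add: d_def H_1C_def)
  have ns2: "\<not> summable (\<lambda>j. \<bar>a j\<bar>)"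
  proof
    assume "summable (\<lambda>j. \<bar>a j\<bar>)"
    hence "summable (\<lambda>j. \<sigma> * \<bar>a j\<bar>)" by (rule summable_mult)
    moreover have "\<sigma> * \<bar>a j\<bar> = \<bar>d \<bullet> phi j\<bar> / sqrt (lam j)" for j
      using sig lam[of j] by (simp add: a_def abs_divide abs_mult)
    ultimately show False using ns by simp
  qed
  obtain n where nbig: "(\<Sum>j<n. \<bar>a j\<bar>) > \<epsilon> / sqrt 2"
  proof (rule ccontr)
    assume "\<not> thesis"
    hence "(\<Sum>j<n. \<bar>a j\<bar>) \<le> \<epsilon> / sqrt 2" for n using that by (meson not_le)
    hence "summable (\<lambda>j. \<bar>a j\<bar>)" by (intro summableI_nonneg_bounded) auto
    thus False using ns2 by simp
  qed
  have n: "n \<noteq> 0"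
  proof
    assume "n = 0"
    hence "\<epsilon> / sqrt 2 < 0" using nbig by simp
    moreover have "\<epsilon> / sqrt 2 > 0" using assms(8) by simp
    ultimately show False by simp
  qed
  define A where "A = {y. \<forall>j<n. ((y - f D2) \<bullet> phi j) / (\<sigma> * sqrt (lam j)) \<in> Bset (a j)}"
  define p where "p j = measure M (Zs j -` Bset (a j) \<inter> space M)" for j
  have p_pos: "p j > 0" for j
    using coord_pos[OF dist[of j], of "a j"] by (simp add: p_def emeasure_eq_measure)
  have P1: "measure (distr M borel (\<lambda>\<omega>. f D1 + \<sigma> *\<^sub>R Z \<omega>)) A = (\<Prod>j<n. exp (sqrt 2 * \<bar>a j\<bar>) * p j)"
  proof -
    have "measure (distr M borel (\<lambda>\<omega>. f D1 + \<sigma> *\<^sub>R Z \<omega>)) A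
       = (\<Prod>j<n. measure M (Zs j -` {x. a j + x \<in> Bset (a j)} \<inter> space M))"
      unfolding A_def a_def d_def by (rule law_prod[OF cov P icl sig n]) simp
    also have "\<dots> = (\<Prod>j<n. exp (sqrt 2 * \<bar>a j\<bar>) * p j)"
    proof (rule prod.cong[OF refl])
      fix j
      have e: "Zs j -` {x. a j + x \<in> Bset (a j)} \<inter> space M = (\<lambda>\<omega>. a j + Zs j \<omega>) -` Bset (a j) \<inter> space M"
        by auto
      have "ennreal (measure M (Zs j -` {x. a j + x \<in> Bset (a j)} \<inter> space M)) = ennreal (exp (sqrt 2 * \<bar>a j\<bar>) * p j)"
        using coord_shift[OF dist[of j], of "a j"] unfolding e p_def
        by (simp add: emeasure_eq_measure ennreal_mult)
      thus "measure M (Zs j -` {x. a j + x \<in> Bset (a j)} \<inter> space M) = exp (sqrt 2 * \<bar>a j\<bar>) * p j"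
        using p_pos[of j] by (subst (asm) ennreal_inj) auto
    qed
    finally show ?thesis .
  qed
  have P2: "measure (distr M borel (\<lambda>\<omega>. f D2 + \<sigma> *\<^sub>R Z \<omega>)) A = (\<Prod>j<n. p j)"
  proof -
    have "measure (distr M borel (\<lambda>\<omega>. f D2 + \<sigma> *\<^sub>R Z \<omega>)) A
       = (\<Prod>j<n. measure M (Zs j -` {x. ((f D2 - f D2) \<bullet> phi j) / (\<sigma> * sqrt (lam j)) + x \<in> Bset (a j)} \<inter> space M))"
      unfolding A_def by (rule law_prod[OF cov P icl sig n]) simp
    also have "\<dots> = (\<Prod>j<n. p j)" by (simp add: p_def)
    finally show ?thesis .
  qed
  have Ab: "A \<in> sets borel"
  proof -
    have gm: "(\<lambda>y. ((y - f D2) \<bullet> phi j) / (\<sigma> * sqrt (lam j))) \<in> borel_measurable borel" for j by measurable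
    have "A = (\<Inter>j\<in>{..<n}. (\<lambda>y. ((y - f D2) \<bullet> phi j) / (\<sigma> * sqrt (lam j))) -` Bset (a j))"
      unfolding A_def using n by auto
    moreover have "(\<lambda>y. ((y - f D2) \<bullet> phi j) / (\<sigma> * sqrt (lam j))) -` Bset (a j) \<in> sets borel" for j
      using measurable_sets[OF gm Bset_borel, of j "a j"] by simp
    ultimately show ?thesis using n by (auto intro!: sets.finite_INT)
  qed
  have "measure (distr M borel (\<lambda>\<omega>. f D1 + \<sigma> *\<^sub>R Z \<omega>)) A \<le> exp \<epsilon> * measure (distr M borel (\<lambda>\<omega>. f D2 + \<sigma> *\<^sub>R Z \<omega>)) A"
    using dp assms(2,3,4) Ab unfolding eps_DP_def by blast
  hence "exp (sqrt 2 * (\<Sum>j<n. \<bar>a j\<bar>)) * (\<Prod>j<n. p j) \<le> exp \<epsilon> * (\<Prod>j<n. p j)"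
    unfolding P1 P2 by (simp add: prod.distrib exp_sum sum_distrib_left)
  moreover have "(\<Prod>j<n. p j) > 0" using p_pos by (simp add: prod_pos)
  ultimately have "exp (sqrt 2 * (\<Sum>j<n. \<bar>a j\<bar>)) \<le> exp \<epsilon>" by simp
  hence "sqrt 2 * (\<Sum>j<n. \<bar>a j\<bar>) \<le> \<epsilon>" by simp
  thus False using nbig by (simp add: field_simps)
qed
end
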